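(* Let $n_1,n_2>1$ and let $\mu_j$ ($j=1,2$) be the measure $d\mu_j(r)=r^{n_j-1}dr$ on $[1,\infty)$. Let $0<\beta<n_1$, $\alpha>0$ and define $$R_1(f)(x)=x^{-\alpha}\int_x^\infty y^{-\beta}f(y)\,d\mu_1(y),\qquad x\ge1.$$ Then $R_1$ is bounded from $L^{p,1}([1,\infty),d\mu_1)$ to $L^{q,\infty}([1,\infty),d\mu_2)$ for all $1<p\le\frac{n_1}{n_1-\beta}$ and $q\ge\frac{n_2}{\alpha}$.
   Context: Lorentz spaces on a measure space $(X,\mu)$: for measurable $f$, $d_f(s)=\mu(\{|f|>s\})$, $f^*(t)=\inf\{s>0:d_f(s)\le t\}$, $\|f\|_{(p,1)}=\int_0^\infty t^{1/p}f^*(t)\frac{dt}{t}$ and $\|f\|_{(q,\infty)}=\sup_{t>0}t^{1/q}f^*(t)$; $L^{p,1}$ and $L^{q,\infty}$ are the spaces where these quantities are finite. *)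

theory Defs
  imports "HOL-Analysis.Analysis"
begin

definition radial_measure :: "real \<Rightarrow> real measure" where
  "radial_measure n = density (restrict_space lebesgue {1..}) (\<lambda>r. ennreal (r powr (n - 1)))"

definition distrib_fun :: "'a measure \<Rightarrow> ('a \<Rightarrow> real) \<Rightarrow> real \<Rightarrow> ennreal" where
  "distrib_fun M f s = emeasure M {x \<in> space M. \<bar>f x\<bar> > s}"

text \<open>Decreasing rearrangement f*(t) = inf{s > 0 : d_f(s) <= t} (inf of empty set = infinity).\<close>
definition rearrangement :: "'a measure \<Rightarrow> ('a \<Rightarrow> real) \<Rightarrow> real \<Rightarrow> ennreal" where
  "rearrangement M f t = Inf (ennreal ` {s. s > 0 \<and> distrib_fun M f s \<le> ennreal t})"

definition lorentz_p1 :: "'a measure \<Rightarrow> real \<Rightarrow> ('a \<Rightarrow> real) \<Rightarrow> ennreal" where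
  "lorentz_p1 M p f =
     (\<integral>\<^sup>+ t. indicator {0<..} t * ennreal (t powr (1 / p) / t) * rearrangement M f t \<partial>lborel)"

definition lorentz_qinf :: "'a measure \<Rightarrow> real \<Rightarrow> ('a \<Rightarrow> real) \<Rightarrow> ennreal" where
  "lorentz_qinf M q f = (SUP t\<in>{0<..}. ennreal (t powr (1 / q)) * rearrangement M f t)"

definition R1 :: "real \<Rightarrow> real \<Rightarrow> real \<Rightarrow> (real \<Rightarrow> real) \<Rightarrow> real \<Rightarrow> real" where
  "R1 n1 \<alpha> \<beta> f x = x powr (-\<alpha>) * (LINT y:{x..}|radial_measure n1. y powr (-\<beta>) * f y)"

end

theory Submission
  imports Defs
begin

lemma space_rm[simp]: "space (radial_measure n) = {1..}"
  by (simp add: radial_measure_def)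

lemma sets_rm[measurable_cong]: "sets (radial_measure n) = sets (lebesgue_on {1..})"
  by (simp add: radial_measure_def)

lemma borel_rm: "g \<in> borel_measurable borel \<Longrightarrow> g \<in> borel_measurable (radial_measure n)"
  apply (subst measurable_cong_sets[OF sets_rm refl])
  apply (rule measurable_restrict_space1)
  apply (rule measurable_completion) by simp

lemma borel_rm_set:
  assumes "A \<in> sets borel"
  shows "A \<inter> {1..} \<in> sets (radial_measure n)"
proof -
  have "A \<in> sets lebesgue" using assms by simp
  then have "{1..} \<inter> A \<in> sets (lebesgue_on {1..})" by (auto simp: sets_restrict_space)
  then show ?thesis by (simp add: sets_rm Int_commute)
qed

lemma nn_integral_rm:
  assumes "h \<in> borel_measurable borel"
  shows "(\<integral>\<^sup>+ y. h y \<partial>radial_measure n) = (\<integral>\<^sup>+ y. ennreal (y powr (n-1)) * h y * indicator {1..} y \<partial>lborel)"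
proof -
  have m: "(\<lambda>r. ennreal (r powr (n - 1))) \<in> borel_measurable (lebesgue_on {1..})"
    apply (rule measurable_restrict_space1) apply (rule measurable_completion) by simp
  have h: "h \<in> borel_measurable (lebesgue_on {1..})"
    apply (rule measurable_restrict_space1) apply (rule measurable_completion) using assms by simp
  have "(\<integral>\<^sup>+ y. h y \<partial>radial_measure n) = (\<integral>\<^sup>+ y. ennreal (y powr (n-1)) * h y \<partial>lebesgue_on {1..})"
    unfolding radial_measure_def using m h by (simp add: nn_integral_density)
  also have "\<dots> = (\<integral>\<^sup>+ y. ennreal (y powr (n-1)) * h y * indicator {1..} y \<partial>lebesgue)"
    by (rule nn_integral_restrict_space) simp
  also have "\<dots> = (\<integral>\<^sup>+ y. ennreal (y powr (n-1)) * h y * indicator {1..} y \<partial>lborel)"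
    by (simp add: nn_integral_completion)
  finally show ?thesis .
qed

lemma rm_powr_bound:
  assumes "b + n > 0" "B \<ge> 0"
  shows "(\<integral>\<^sup>+ y. indicator {..<B} y * ennreal (y powr b) \<partial>radial_measure n) \<le> ennreal (B powr (b + n) / (b+n))"
proof -
  have "(\<integral>\<^sup>+ y. indicator {..<B} y * ennreal (y powr b) \<partial>radial_measure n)
     = (\<integral>\<^sup>+ y. ennreal (y powr (n-1)) * (indicator {..<B} y * ennreal (y powr b)) * indicator {1..} y \<partial>lborel)"
    by (rule nn_integral_rm) simp
  also have "\<dots> \<le> (\<integral>\<^sup>+ y. ennreal (y powr (b + n - 1)) * indicator {0..B} y \<partial>lborel)"
  proof (rule nn_integral_mono)
    fix y :: real
    show "ennreal (y powr (n-1)) * (indicator {..<B} y * ennreal (y powr b)) * indicator {1..} y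
       \<le> ennreal (y powr (b + n - 1)) * indicator {0..B} y"
    proof (cases "y \<ge> 1 \<and> y < B")
      case True
      have e: "n - 1 + b = b + n - 1" by simp
      then have "y powr (n-1) * y powr b = y powr (b + n - 1)"
        by (metis powr_add)
      then show ?thesis using True
        by (simp add: indicator_def ennreal_mult'[symmetric] flip: ennreal_mult)
    qed (auto simp: indicator_def)
  qed
  also have "\<dots> = ennreal (B powr (b + n - 1 + 1) / (b + n - 1 + 1))"
  proof (rule nn_integral_has_integral_lebesgue')
    show "((\<lambda>x. x powr (b + n - 1)) has_integral B powr (b + n - 1 + 1) / (b + n - 1 + 1)) {0..B}"
      by (rule has_integral_powr_from_0) (use assms in auto)
  qed simp
  finally show ?thesis by simp
qed

lemma sf_rm:
  assumes "n > 0"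
  shows "sigma_finite_measure (radial_measure n)"
proof
  let ?A = "range (\<lambda>k::nat. {..<real k} \<inter> {1..})"
  have fin: "emeasure (radial_measure n) ({..<real k} \<inter> {1..}) \<noteq> \<infinity>" for k
  proof -
    have "emeasure (radial_measure n) ({..<real k} \<inter> {1..})
        = (\<integral>\<^sup>+ y. indicator ({..<real k} \<inter> {1..}) y \<partial>radial_measure n)"
      using borel_rm_set[of "{..<real k}" n] by simp
    also have "\<dots> = (\<integral>\<^sup>+ y. indicator {..<real k} y * ennreal (y powr 0) \<partial>radial_measure n)"
      by (rule nn_integral_cong) (auto simp: indicator_def)
    also have "\<dots> \<le> ennreal (real k powr (0 + n) / (0 + n))"
      by (rule rm_powr_bound) (use assms in auto)
    finally have le: "emeasure (radial_measure n) ({..<real k} \<inter> {1..}) \<le> ennreal (real k powr (0 + n) / (0 + n))" .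
    show ?thesis
    proof
      assume "emeasure (radial_measure n) ({..<real k} \<inter> {1..}) = \<infinity>"
      with le show False by (simp add: top_unique)
    qed
  qed
  show "\<exists>A. countable A \<and> A \<subseteq> sets (radial_measure n) \<and> \<Union> A = space (radial_measure n) \<and>
      (\<forall>a\<in>A. emeasure (radial_measure n) a \<noteq> \<infinity>)"
  proof (intro exI[of _ ?A] conjI)
    show "countable ?A" by simp
    show "?A \<subseteq> sets (radial_measure n)" using borel_rm_set by auto
    show "\<Union> ?A = space (radial_measure n)"
    proof
      show "space (radial_measure n) \<subseteq> \<Union> ?A"
      proof
        fix x assume "x \<in> space (radial_measure n)"
        then have "x \<ge> 1" by simp
        obtain k where "x < real k" using reals_Archimedean2 by blast
        then show "x \<in> \<Union> ?A" using \<open>x \<ge> 1\<close> by auto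
      qed
    qed auto
    show "\<forall>a\<in>?A. emeasure (radial_measure n) a \<noteq> \<infinity>" using fin by auto
  qed
qed

lemma antimono_meas:
  fixes g :: "real \<Rightarrow> ennreal"
  assumes "\<And>x y. x \<le> y \<Longrightarrow> g y \<le> g x"
  shows "g \<in> borel_measurable borel"
proof (rule borel_measurableI_greater)
  fix c
  have "is_interval {x. c < g x}"
    unfolding is_interval_1
  proof (intro allI impI ballI)
    fix a b x assume ab: "a \<in> {x. c < g x}" "b \<in> {x. c < g x}" "a \<le> x \<and> x \<le> b"
    have 1: "c < g b" using ab(2) by simp
    have 2: "g b \<le> g x" using assms[of x b] ab(3) by simp
    from 1 2 have "c < g x" by (rule less_le_trans)
    then show "x \<in> {x. c < g x}" by simp
  qed
  then have "{x. c < g x} \<in> sets borel" by (rule real_interval_borel_measurable)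
  then show "{x \<in> space borel. c < g x} \<in> sets borel" by simp
qed

lemma rearr_anti:
  assumes tt: "t \<le> t'"
  shows "rearrangement M f t' \<le> rearrangement M f t"
  unfolding rearrangement_def
proof (intro Inf_superset_mono image_mono subsetI)
  fix s assume "s \<in> {s. 0 < s \<and> distrib_fun M f s \<le> ennreal t}"
  then have a: "0 < s" "distrib_fun M f s \<le> ennreal t" by auto
  have "ennreal t \<le> ennreal t'" by (rule ennreal_leI) (rule tt)
  with a show "s \<in> {s. 0 < s \<and> distrib_fun M f s \<le> ennreal t'}" by (blast intro: order_trans)
qed

lemma distrib_anti:
  assumes "f \<in> borel_measurable M" "a \<le> b"
  shows "distrib_fun M f b \<le> distrib_fun M f a"
  unfolding distrib_fun_def
  by (rule emeasure_mono) (use assms in auto)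

lemma key_rearr:
  assumes f: "f \<in> borel_measurable M" and s: "0 < s" and le: "rearrangement M f t \<le> ennreal s"
  shows "distrib_fun M f s \<le> ennreal t"
proof -
  let ?D = "distrib_fun M f"
  have step: "?D (s + inverse (real (Suc k))) \<le> ennreal t" for k
  proof -
    have ip: "0 < inverse (real (Suc k))" by simp
    have "ennreal s < ennreal (s + inverse (real (Suc k)))"
    proof (rule ennreal_lessI)
      show "0 < s + inverse (real (Suc k))" using s ip by linarith
      show "s < s + inverse (real (Suc k))" using ip by linarith
    qed
    then have "rearrangement M f t < ennreal (s + inverse (real (Suc k)))"
      using le by (meson le_less_trans)
    then obtain s' where s': "s' > 0" "?D s' \<le> ennreal t" "ennreal s' < ennreal (s + inverse (real (Suc k)))"
      unfolding rearrangement_def by (auto simp: Inf_less_iff)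
    then have "s' \<le> s + inverse (real (Suc k))"
      by (simp add: ennreal_less_iff)
    then have "?D (s + inverse (real (Suc k))) \<le> ?D s'"
      by (rule distrib_anti[OF f])
    then show ?thesis using s'(2) by (rule order_trans)
  qed
  let ?A = "\<lambda>k. {x \<in> space M. s + inverse (real (Suc k)) < \<bar>f x\<bar>}"
  have "range ?A \<subseteq> sets M" using f by auto
  moreover have "incseq ?A"
  proof (rule incseq_SucI)
    fix k
    have iv: "inverse (real (Suc (Suc k))) \<le> inverse (real (Suc k))"
      by (rule le_imp_inverse_le) auto
    show "?A k \<subseteq> ?A (Suc k)"
    proof (rule subsetI)
      fix x assume "x \<in> ?A k"
      then have x1: "x \<in> space M" and x2: "s + inverse (real (Suc k)) < \<bar>f x\<bar>" by auto
      have "s + inverse (real (Suc (Suc k))) < \<bar>f x\<bar>" using x2 iv by linarith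
      then show "x \<in> ?A (Suc k)" using x1 by blast
    qed
  qed
  ultimately have "(SUP k. emeasure M (?A k)) = emeasure M (\<Union>k. ?A k)"
    by (rule SUP_emeasure_incseq)
  moreover have "(\<Union>k. ?A k) = {x \<in> space M. s < \<bar>f x\<bar>}"
  proof
    show "{x \<in> space M. s < \<bar>f x\<bar>} \<subseteq> (\<Union>k. ?A k)"
    proof (rule subsetI)
      fix x assume x: "x \<in> {x \<in> space M. s < \<bar>f x\<bar>}"
      then obtain m where m: "m > 0" "inverse (real m) < \<bar>f x\<bar> - s"
        using ex_inverse_of_nat_less[of "\<bar>f x\<bar> - s"] by auto
      then have "Suc (m - 1) = m" by simp
      then have "inverse (real (Suc (m - 1))) < \<bar>f x\<bar> - s" using m by simp
      then have "s + inverse (real (Suc (m - 1))) < \<bar>f x\<bar>" by linarith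
      moreover have "x \<in> space M" using x by blast
      ultimately show "x \<in> (\<Union>k. ?A k)" by blast
    qed
  next
    show "(\<Union>k. ?A k) \<subseteq> {x \<in> space M. s < \<bar>f x\<bar>}"
    proof (rule subsetI)
      fix x assume "x \<in> (\<Union>k. ?A k)"
      then obtain k where x1: "x \<in> space M" and x2: "s + inverse (real (Suc k)) < \<bar>f x\<bar>" by blast
      have "0 < inverse (real (Suc k))" by simp
      then have "s < \<bar>f x\<bar>" using x2 by linarith
      then show "x \<in> {x \<in> space M. s < \<bar>f x\<bar>}" using x1 by blast
    qed
  qed
  ultimately have "?D s = (SUP k. ?D (s + inverse (real (Suc k))))"
    unfolding distrib_fun_def by simp
  then show ?thesis using step by (simp add: SUP_least)
qed

definition Gf :: "real \<Rightarrow> ennreal \<Rightarrow> ennreal" where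
  "Gf e x = (\<integral>\<^sup>+ t. (if 0 < t \<and> ennreal t < x then ennreal (t powr e) else 0) \<partial>lborel)"

lemma Gf_mono:
  assumes xy: "x \<le> y"
  shows "Gf e x \<le> Gf e y"
  unfolding Gf_def
proof (intro nn_integral_mono)
  fix t :: real
  show "(if 0 < t \<and> ennreal t < x then ennreal (t powr e) else 0)
     \<le> (if 0 < t \<and> ennreal t < y then ennreal (t powr e) else 0)"
  proof (cases "0 < t \<and> ennreal t < x")
    case True
    then have "ennreal t < y" using xy by (meson less_le_trans)
    with True show ?thesis by simp
  next
    case False
    show ?thesis by (subst if_not_P[OF False]) simp
  qed
qed

lemma Gf_lower:
  assumes e: "e \<le> 0" and m: "0 \<le> m"
  shows "ennreal (m powr (e + 1)) \<le> Gf e (ennreal m)"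
proof (cases "m = 0")
  case True then show ?thesis by simp
next
  case False
  then have m0: "m > 0" using m by simp
  have "ennreal (m powr (e + 1)) = ennreal (m powr e) * ennreal m"
    using m0 by (simp add: powr_add ennreal_mult')
  also have "\<dots> = (\<integral>\<^sup>+ t. ennreal (m powr e) * indicator {0<..<m} t \<partial>lborel)"
    using m0 by (simp add: nn_integral_cmult_indicator)
  also have "\<dots> \<le> Gf e (ennreal m)"
    unfolding Gf_def
  proof (intro nn_integral_mono)
    fix t :: real
    show "ennreal (m powr e) * indicator {0<..<m} t
      \<le> (if 0 < t \<and> ennreal t < ennreal m then ennreal (t powr e) else 0)"
    proof (cases "0 < t \<and> t < m")
      case True
      then have "m powr e \<le> t powr e" using e by (intro powr_mono2') auto
      moreover have "ennreal t < ennreal m" using True by (intro ennreal_lessI) auto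
      ultimately show ?thesis using True by (auto simp: indicator_def intro: ennreal_leI)
    qed (auto simp: indicator_def)
  qed
  finally show ?thesis .
qed

lemma Gf_top:
  assumes e: "e \<le> 0" "e > -1"
  shows "Gf e top = top"
proof (rule ccontr)
  assume "Gf e top \<noteq> top"
  then obtain c where c: "Gf e top = ennreal c" "c \<ge> 0" by (cases "Gf e top") auto
  define m where "m = (c + 1) powr (1 / (e + 1))"
  have "m powr (e + 1) = c + 1"
    unfolding m_def using c e by (simp add: powr_powr)
  moreover have "m \<ge> 0" unfolding m_def by simp
  ultimately have "ennreal (c + 1) \<le> Gf e (ennreal m)" using Gf_lower[OF e(1), of m] by simp
  also have "\<dots> \<le> Gf e top" by (rule Gf_mono) simp
  finally show False using c by simp
qed

lemma exps:
  fixes p :: real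
  assumes "1 < p"
  shows "1/p - 1 \<le> 0" "1/p - 1 > -1" "0 < 1/p" "1/p \<le> 1"
  using assms by (auto simp: field_simps)

lemma set_bound:
  assumes n1: "n1 > 1" and b: "0 < \<beta>" "\<beta> < n1" and p: "1 < p" "p \<le> n1 / (n1 - \<beta>)"
    and E: "E \<in> sets (radial_measure n1)"
  shows "(\<integral>\<^sup>+ y. indicator E y * ennreal (y powr - \<beta>) \<partial>radial_measure n1)
     \<le> ennreal (1 + 1 / (n1 - \<beta>)) * Gf (1/p - 1) (emeasure (radial_measure n1) E)"
proof -
  let ?M = "radial_measure n1"
  define C where "C = 1 + 1 / (n1 - \<beta>)"
  have C1: "C \<ge> 1" unfolding C_def using b by simp
  note e = exps[OF p(1)]
  show ?thesis
  proof (cases "emeasure ?M E = \<infinity>")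
    case True
    have "Gf (1/p - 1) top = top" by (rule Gf_top) (use e in auto)
    then show ?thesis using True C1 unfolding C_def[symmetric] by (simp add: ennreal_mult_top)
  next
    case False
    then obtain m where m: "emeasure ?M E = ennreal m" "0 \<le> m"
      by (cases "emeasure ?M E") auto
    have G: "ennreal (m powr (1/p)) \<le> Gf (1/p - 1) (ennreal m)"
      using Gf_lower[of "1/p - 1" m] e m by simp
    have w1: "y powr - \<beta> \<le> 1" if "y \<in> space ?M" for y
    proof -
      have "y \<ge> 1" using that by simp
      then have "y powr - \<beta> \<le> 1 powr - \<beta>" using b by (intro powr_mono2') auto
      then show ?thesis by simp
    qed
    have main: "(\<integral>\<^sup>+ y. indicator E y * ennreal (y powr - \<beta>) \<partial>?M) \<le> ennreal (C * m powr (1/p))"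
    proof (cases "m \<le> 1")
      case True
      have "(\<integral>\<^sup>+ y. indicator E y * ennreal (y powr - \<beta>) \<partial>?M) \<le> (\<integral>\<^sup>+ y. indicator E y \<partial>?M)"
      proof (rule nn_integral_mono)
        fix y assume y: "y \<in> space ?M"
        have "ennreal (y powr - \<beta>) \<le> 1" using w1[OF y] by (simp add: ennreal_le_1)
        then show "indicator E y * ennreal (y powr - \<beta>) \<le> indicator E y"
          by (simp add: indicator_def)
      qed
      also have "\<dots> = ennreal m" using E m by simp
      also have "\<dots> \<le> ennreal (C * m powr (1/p))"
      proof (rule ennreal_leI)
        have "m \<le> m powr (1/p)"
        proof (cases "m = 0")
          case False
          have "m powr 1 \<le> m powr (1/p)" using e True m by (intro powr_mono') auto
          then show ?thesis using m by simp
        qed simp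
        also have "\<dots> \<le> C * m powr (1/p)" using mult_right_mono[OF C1, of "m powr (1/p)"] by simp
        finally show "m \<le> C * m powr (1/p)" .
      qed
      finally show ?thesis .
    next
      case False
      then have m1: "m > 1" by simp
      define A where "A = m powr (1/n1)"
      have A1: "A \<ge> 1" unfolding A_def using m1 n1 by (intro ge_one_powr_ge_zero) auto
      have "(\<integral>\<^sup>+ y. indicator E y * ennreal (y powr - \<beta>) \<partial>?M)
          \<le> (\<integral>\<^sup>+ y. indicator {..<A} y * ennreal (y powr - \<beta>) + ennreal (A powr - \<beta>) * indicator E y \<partial>?M)"
      proof (rule nn_integral_mono)
        fix y assume y: "y \<in> space ?M"
        show "indicator E y * ennreal (y powr - \<beta>)
          \<le> indicator {..<A} y * ennreal (y powr - \<beta>) + ennreal (A powr - \<beta>) * indicator E y"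
        proof (cases "y \<in> E")
          case yE: True
          show ?thesis
          proof (cases "y < A")
            case True
            then show ?thesis using yE by (simp add: indicator_def)
          next
            case False
            then have "y powr - \<beta> \<le> A powr - \<beta>" using A1 b by (intro powr_mono2') auto
            then have "ennreal (y powr - \<beta>) \<le> ennreal (A powr - \<beta>)" by (rule ennreal_leI)
            then show ?thesis using yE False by (simp add: indicator_def)
          qed
        qed (simp add: indicator_def)
      qed
      also have "\<dots> = (\<integral>\<^sup>+ y. indicator {..<A} y * ennreal (y powr - \<beta>) \<partial>?M)
           + (\<integral>\<^sup>+ y. ennreal (A powr - \<beta>) * indicator E y \<partial>?M)"
      proof (rule nn_integral_add)
        show "(\<lambda>y. indicator {..<A} y * ennreal (y powr - \<beta>)) \<in> borel_measurable ?M"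
          by (rule borel_rm) simp
        show "(\<lambda>y. ennreal (A powr - \<beta>) * indicator E y) \<in> borel_measurable ?M"
          using E by (intro borel_measurable_times_ennreal borel_measurable_const borel_measurable_indicator)
      qed
      also have "\<dots> \<le> ennreal (A powr (- \<beta> + n1) / (- \<beta> + n1)) + ennreal (A powr - \<beta>) * ennreal m"
      proof (rule add_mono)
        show "(\<integral>\<^sup>+ y. indicator {..<A} y * ennreal (y powr - \<beta>) \<partial>?M) \<le> ennreal (A powr (- \<beta> + n1) / (- \<beta> + n1))"
          by (rule rm_powr_bound) (use b A1 in auto)
        show "(\<integral>\<^sup>+ y. ennreal (A powr - \<beta>) * indicator E y \<partial>?M) \<le> ennreal (A powr - \<beta>) * ennreal m"
          using E m by (simp add: nn_integral_cmult_indicator)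
      qed
      also have "\<dots> = ennreal (A powr (- \<beta> + n1) / (- \<beta> + n1) + A powr - \<beta> * m)"
      proof -
        have nn1: "0 \<le> A powr (- \<beta> + n1) / (- \<beta> + n1)" using b by simp
        have nn2: "0 \<le> A powr - \<beta>" by simp
        show ?thesis
          by (simp only: ennreal_plus[OF nn1 mult_nonneg_nonneg[OF nn2 m(2)]] ennreal_mult[OF nn2 m(2)])
      qed
      also have "\<dots> \<le> ennreal (C * m powr (1/p))"
      proof (rule ennreal_leI)
        define r where "r = (n1 - \<beta>) / n1"
        have m0: "m > 0" using m1 by simp
        have "A powr (- \<beta> + n1) = m powr r"
          unfolding A_def r_def using m0 n1 by (simp add: powr_powr)
        moreover have "A powr - \<beta> * m = m powr r"
        proof -
          have "A powr - \<beta> = m powr (- \<beta> / n1)" unfolding A_def using m0 by (simp add: powr_powr)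
          moreover have "m powr (- \<beta> / n1) * m = m powr (- \<beta> / n1 + 1)"
          proof -
            have "m powr (- \<beta> / n1 + 1) = m powr (- \<beta> / n1) * m powr 1" by (rule powr_add)
            then show ?thesis using m0 by simp
          qed
          moreover have "- \<beta> / n1 + 1 = r" unfolding r_def using n1 by (simp add: field_simps)
          ultimately show ?thesis by simp
        qed
        moreover have "m powr r \<le> m powr (1/p)"
        proof (rule powr_mono)
          have "p * (n1 - \<beta>) \<le> n1" using p b by (simp add: le_divide_eq)
          then show "r \<le> 1/p" unfolding r_def using p b n1 by (simp add: field_simps)
        qed (use m1 in simp)
        ultimately have "A powr (- \<beta> + n1) / (- \<beta> + n1) + A powr - \<beta> * m = m powr r * C"
          unfolding C_def by (simp add: field_simps)
        also have "\<dots> \<le> m powr (1/p) * C" using \<open>m powr r \<le> m powr (1/p)\<close> C1 by (simp add: mult_right_mono)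
        finally show "A powr (- \<beta> + n1) / (- \<beta> + n1) + A powr - \<beta> * m \<le> C * m powr (1/p)"
          by (simp add: mult.commute)
      qed
      finally show ?thesis .
    qed
    also have "\<dots> = ennreal C * ennreal (m powr (1/p))"
      using C1 by (simp add: ennreal_mult)
    also have "\<dots> \<le> ennreal C * Gf (1/p - 1) (ennreal m)"
      by (rule mult_left_mono[OF G]) simp
    finally show ?thesis unfolding C_def m(1) .
  qed
qed

lemma ind_Ioo_int:
  assumes "0 \<le> (a::real)"
  shows "(\<integral>\<^sup>+ s. indicator {0<..<a} s \<partial>lborel) = ennreal a"
  using assms by simp

lemma layer_cake:
  fixes M :: "'a measure" and f w :: "'a \<Rightarrow> real"
  assumes sf: "sigma_finite_measure M" and f[measurable]: "f \<in> borel_measurable M"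
    and w[measurable]: "w \<in> borel_measurable M"
  shows "(\<integral>\<^sup>+ y. ennreal \<bar>f y\<bar> * ennreal (w y) \<partial>M)
    = (\<integral>\<^sup>+ s. (\<integral>\<^sup>+ y. (if 0 < s \<and> s < \<bar>f y\<bar> then ennreal (w y) else 0) \<partial>M) \<partial>lborel)"
proof -
  have ps: "pair_sigma_finite M lborel"
    unfolding pair_sigma_finite_def using sf sigma_finite_lborel by simp
  have "(\<integral>\<^sup>+ y. ennreal \<bar>f y\<bar> * ennreal (w y) \<partial>M)
      = (\<integral>\<^sup>+ y. (\<integral>\<^sup>+ s. (if 0 < s \<and> s < \<bar>f y\<bar> then ennreal (w y) else 0) \<partial>lborel) \<partial>M)"
  proof (rule nn_integral_cong)
    fix y
    have "(\<integral>\<^sup>+ s. (if 0 < s \<and> s < \<bar>f y\<bar> then ennreal (w y) else 0) \<partial>lborel)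
        = (\<integral>\<^sup>+ s. indicator {0<..<\<bar>f y\<bar>} s * ennreal (w y) \<partial>lborel)"
      by (rule nn_integral_cong) (simp add: indicator_def)
    also have "\<dots> = (\<integral>\<^sup>+ s. indicator {0<..<\<bar>f y\<bar>} s \<partial>lborel) * ennreal (w y)"
      by (rule nn_integral_multc) simp
    also have "\<dots> = ennreal \<bar>f y\<bar> * ennreal (w y)"
      by (simp only: ind_Ioo_int[OF abs_ge_zero])
    finally show "ennreal \<bar>f y\<bar> * ennreal (w y)
        = (\<integral>\<^sup>+ s. (if 0 < s \<and> s < \<bar>f y\<bar> then ennreal (w y) else 0) \<partial>lborel)" by simp
  qed
  also have "\<dots> = (\<integral>\<^sup>+ s. (\<integral>\<^sup>+ y. (if 0 < s \<and> s < \<bar>f y\<bar> then ennreal (w y) else 0) \<partial>M) \<partial>lborel)"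
  proof (rule pair_sigma_finite.Fubini'[OF ps, symmetric])
    show "(\<lambda>(y, s). if 0 < s \<and> s < \<bar>f y\<bar> then ennreal (w y) else 0) \<in> borel_measurable (M \<Otimes>\<^sub>M lborel)"
      by measurable
  qed
  finally show ?thesis .
qed

lemma inner_le:
  fixes x c :: ennreal
  shows "(\<integral>\<^sup>+ s. (if 0 < s \<and> ennreal s < x then c else 0) \<partial>lborel) \<le> c * x"
proof (cases x)
  case (real r)
  have "(\<integral>\<^sup>+ s. (if 0 < s \<and> ennreal s < x then c else 0) \<partial>lborel)
      = (\<integral>\<^sup>+ s. c * indicator {0<..<r} s \<partial>lborel)"
  proof (rule nn_integral_cong)
    fix s :: real
    show "(if 0 < s \<and> ennreal s < x then c else 0) = c * indicator {0<..<r} s"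
    proof (cases "0 < s")
      case True
      then have "(ennreal s < x) = (s < r)" using real by (simp add: ennreal_less_iff)
      then show ?thesis using True by (simp add: indicator_def)
    qed (simp add: indicator_def)
  qed
  also have "\<dots> = c * ennreal r" using real by (simp add: nn_integral_cmult_indicator)
  finally show ?thesis using real by simp
next
  case top
  show ?thesis
  proof (cases "c = 0")
    case True
    have "(\<lambda>s::real. if 0 < s \<and> ennreal s < x then c else 0) = (\<lambda>s. 0)"
      using True by (intro ext) simp
    then show ?thesis by simp
  next
    case False then show ?thesis using top by (simp add: ennreal_mult_top)
  qed
qed

lemma tonelli_rearr:
  fixes M :: "'a measure" and f :: "'a \<Rightarrow> real"
  assumes f: "f \<in> borel_measurable M"
  shows "(\<integral>\<^sup>+ s. (if 0 < s then Gf e (distrib_fun M f s) else 0) \<partial>lborel)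
     \<le> (\<integral>\<^sup>+ t. (if 0 < t then ennreal (t powr e) * rearrangement M f t else 0) \<partial>lborel)"
proof -
  let ?R = "rearrangement M f"
  have R[measurable]: "?R \<in> borel_measurable borel"
    by (rule antimono_meas) (rule rearr_anti)
  let ?F = "\<lambda>s t. (if 0 < s \<and> 0 < t \<and> ennreal s < ?R t then ennreal (t powr e) else 0)"
  have "(\<integral>\<^sup>+ s. (if 0 < s then Gf e (distrib_fun M f s) else 0) \<partial>lborel)
     \<le> (\<integral>\<^sup>+ s. (\<integral>\<^sup>+ t. ?F s t \<partial>lborel) \<partial>lborel)"
  proof (rule nn_integral_mono)
    fix s :: real
    show "(if 0 < s then Gf e (distrib_fun M f s) else 0) \<le> (\<integral>\<^sup>+ t. ?F s t \<partial>lborel)"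
    proof (cases "0 < s")
      case s: True
      have "Gf e (distrib_fun M f s) \<le> (\<integral>\<^sup>+ t. ?F s t \<partial>lborel)"
        unfolding Gf_def
      proof (rule nn_integral_mono)
        fix t :: real
        show "(if 0 < t \<and> ennreal t < distrib_fun M f s then ennreal (t powr e) else 0) \<le> ?F s t"
        proof (cases "0 < t \<and> ennreal t < distrib_fun M f s")
          case True
          have "ennreal s < ?R t"
          proof (rule ccontr)
            assume "\<not> ennreal s < ?R t"
            then have "?R t \<le> ennreal s" by simp
            then have "distrib_fun M f s \<le> ennreal t" by (rule key_rearr[OF f s])
            then show False using True by (meson leD)
          qed
          then show ?thesis using True s by simp
        next
          case False
          show ?thesis by (subst if_not_P[OF False]) simp
        qed
      qed
      then show ?thesis using s by simp
    qed simp
  qed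
  also have "\<dots> = (\<integral>\<^sup>+ t. (\<integral>\<^sup>+ s. ?F s t \<partial>lborel) \<partial>lborel)"
  proof (rule lborel_pair.Fubini'[symmetric])
    show "(\<lambda>(s, t). ?F s t) \<in> borel_measurable (lborel \<Otimes>\<^sub>M lborel)"
      by measurable
  qed
  also have "\<dots> \<le> (\<integral>\<^sup>+ t. (if 0 < t then ennreal (t powr e) * ?R t else 0) \<partial>lborel)"
  proof (rule nn_integral_mono)
    fix t :: real
    show "(\<integral>\<^sup>+ s. ?F s t \<partial>lborel) \<le> (if 0 < t then ennreal (t powr e) * ?R t else 0)"
    proof (cases "0 < t")
      case True
      have "(\<integral>\<^sup>+ s. ?F s t \<partial>lborel) = (\<integral>\<^sup>+ s. (if 0 < s \<and> ennreal s < ?R t then ennreal (t powr e) else 0) \<partial>lborel)"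
        using True by simp
      also have "\<dots> \<le> ennreal (t powr e) * ?R t" by (rule inner_le)
      finally show ?thesis using True by simp
    qed simp
  qed
  finally show ?thesis .
qed

lemma weighted_bound:
  assumes n1: "n1 > 1" and b: "0 < \<beta>" "\<beta> < n1" and p: "1 < p" "p \<le> n1 / (n1 - \<beta>)"
    and f[measurable]: "f \<in> borel_measurable (radial_measure n1)"
  shows "(\<integral>\<^sup>+ y. ennreal \<bar>f y\<bar> * ennreal (y powr - \<beta>) \<partial>radial_measure n1)
     \<le> ennreal (1 + 1 / (n1 - \<beta>)) * lorentz_p1 (radial_measure n1) p f"
proof -
  let ?M = "radial_measure n1"
  let ?C = "ennreal (1 + 1 / (n1 - \<beta>))"
  let ?e = "1/p - 1"
  let ?D = "distrib_fun ?M f"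
  have w[measurable]: "(\<lambda>y::real. y powr - \<beta>) \<in> borel_measurable ?M" by (rule borel_rm) simp
  have sf: "sigma_finite_measure ?M" by (rule sf_rm) (use n1 in simp)
  have "(\<integral>\<^sup>+ y. ennreal \<bar>f y\<bar> * ennreal (y powr - \<beta>) \<partial>?M)
    = (\<integral>\<^sup>+ s. (\<integral>\<^sup>+ y. (if 0 < s \<and> s < \<bar>f y\<bar> then ennreal (y powr - \<beta>) else 0) \<partial>?M) \<partial>lborel)"
    by (rule layer_cake[OF sf f w])
  also have "\<dots> \<le> (\<integral>\<^sup>+ s. ?C * (if 0 < s then Gf ?e (?D s) else 0) \<partial>lborel)"
  proof (rule nn_integral_mono)
    fix s :: real
    show "(\<integral>\<^sup>+ y. (if 0 < s \<and> s < \<bar>f y\<bar> then ennreal (y powr - \<beta>) else 0) \<partial>?M)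
        \<le> ?C * (if 0 < s then Gf ?e (?D s) else 0)"
    proof (cases "0 < s")
      case True
      let ?E = "{y \<in> space ?M. s < \<bar>f y\<bar>}"
      have E: "?E \<in> sets ?M" by measurable
      have "(\<integral>\<^sup>+ y. (if 0 < s \<and> s < \<bar>f y\<bar> then ennreal (y powr - \<beta>) else 0) \<partial>?M)
          = (\<integral>\<^sup>+ y. indicator ?E y * ennreal (y powr - \<beta>) \<partial>?M)"
        using True by (intro nn_integral_cong) (simp add: indicator_def)
      also have "\<dots> \<le> ?C * Gf ?e (emeasure ?M ?E)"
        by (rule set_bound[OF n1 b p E])
      finally show ?thesis using True by (simp add: distrib_fun_def)
    qed simp
  qed
  also have "\<dots> = ?C * (\<integral>\<^sup>+ s. (if 0 < s then Gf ?e (?D s) else 0) \<partial>lborel)"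
  proof (rule nn_integral_cmult)
    have h: "(\<lambda>s. Gf ?e (?D s)) \<in> borel_measurable borel"
    proof (rule antimono_meas)
      fix x y :: real assume "x \<le> y"
      then have "?D y \<le> ?D x" by (rule distrib_anti[OF f])
      then show "Gf ?e (?D y) \<le> Gf ?e (?D x)" by (rule Gf_mono)
    qed
    have "(\<lambda>s. if 0 < s then Gf ?e (?D s) else 0) = (\<lambda>s. indicator {0<..} s * Gf ?e (?D s))"
      by (auto simp: indicator_def)
    moreover have "(\<lambda>s. indicator {0<..} s * Gf ?e (?D s)) \<in> borel_measurable borel"
      using h by (intro borel_measurable_times_ennreal borel_measurable_indicator) auto
    ultimately show "(\<lambda>s. if 0 < s then Gf ?e (?D s) else 0) \<in> borel_measurable lborel" by simp
  qed
  also have "\<dots> \<le> ?C * (\<integral>\<^sup>+ t. (if 0 < t then ennreal (t powr ?e) * rearrangement ?M f t else 0) \<partial>lborel)"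
    by (rule mult_left_mono[OF tonelli_rearr[OF f]]) simp
  also have "(\<integral>\<^sup>+ t. (if 0 < t then ennreal (t powr ?e) * rearrangement ?M f t else 0) \<partial>lborel)
      = lorentz_p1 ?M p f"
    unfolding lorentz_p1_def
  proof (rule nn_integral_cong)
    fix t :: real
    show "(if 0 < t then ennreal (t powr ?e) * rearrangement ?M f t else 0)
        = indicator {0<..} t * ennreal (t powr (1 / p) / t) * rearrangement ?M f t"
    proof (cases "0 < t")
      case True
      have "t powr ?e = t powr (1/p) / t powr 1" by (rule powr_diff)
      then have "t powr ?e = t powr (1/p) / t" using True by simp
      then show ?thesis using True by simp
    qed simp
  qed
  finally show ?thesis .
qed

lemma weak_bound:
  fixes h :: "real \<Rightarrow> real"
  assumes n2: "n2 > 1" and a: "\<alpha> > 0" and q: "q \<ge> n2 / \<alpha>" and K: "K \<ge> 0"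
    and hb: "\<And>x. x \<ge> 1 \<Longrightarrow> \<bar>h x\<bar> \<le> x powr - \<alpha> * K"
  shows "lorentz_qinf (radial_measure n2) q h \<le> ennreal K"
  unfolding lorentz_qinf_def
proof (rule SUP_least)
  let ?M = "radial_measure n2"
  fix t :: real assume "t \<in> {0<..}"
  then have t: "t > 0" by simp
  have q0: "q > 0" using q n2 a by (smt (verit) divide_pos_pos)
  have qa: "1/q \<le> \<alpha>/n2"
  proof -
    have pos: "0 < q * (n2 / \<alpha>)" by (rule mult_pos_pos) (use q0 n2 a in auto)
    have "1/q \<le> 1/(n2/\<alpha>)" by (rule divide_left_mono[OF q _ pos]) simp
    then show ?thesis by simp
  qed
  show "ennreal (t powr (1 / q)) * rearrangement ?M h t \<le> ennreal K"
  proof (rule ennreal_le_epsilon)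
    fix \<epsilon> :: real assume \<epsilon>: "0 < \<epsilon>"
    define L where "L = K + \<epsilon>"
    have L: "L > 0" "K \<le> L" unfolding L_def using K \<epsilon> by auto
    have hL: "\<bar>h x\<bar> \<le> L * x powr - \<alpha>" if "x \<ge> 1" for x
    proof -
      have "\<bar>h x\<bar> \<le> x powr - \<alpha> * K" by (rule hb[OF that])
      also have "\<dots> \<le> x powr - \<alpha> * L" using L by (intro mult_left_mono) auto
      finally show ?thesis by (simp add: mult.commute)
    qed
    define s where "s = (if t \<le> 1 then L else L * (n2 * t) powr (- \<alpha> / n2))"
    have s0: "s > 0" unfolding s_def using L t n2 by auto
    have Ds: "distrib_fun ?M h s \<le> ennreal t"
    proof (cases "t \<le> 1")
      case True
      have "{x \<in> space ?M. s < \<bar>h x\<bar>} = {}"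
      proof (safe)
        fix x assume x: "x \<in> space ?M" "s < \<bar>h x\<bar>"
        then have x1: "x \<ge> 1" by simp
        have "x powr - \<alpha> \<le> 1 powr - \<alpha>" using x1 a by (intro powr_mono2') auto
        then have "L * x powr - \<alpha> \<le> L" using L mult_left_mono[of "x powr - \<alpha>" 1 L] by simp
        then show "x \<in> {}" using hL[OF x1] x(2) True unfolding s_def by simp
      qed
      then show ?thesis unfolding distrib_fun_def by (simp only: emeasure_empty zero_le)
    next
      case False
      define B where "B = (n2 * t) powr (1 / n2)"
      have B0: "B \<ge> 0" unfolding B_def by simp
      have nt: "n2 * t > 0" using n2 t by simp
      have sub: "{x \<in> space ?M. s < \<bar>h x\<bar>} \<subseteq> {..<B} \<inter> {1..}"
      proof safe
        fix x assume x: "x \<in> space ?M" "s < \<bar>h x\<bar>"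
        then have x1: "x \<ge> 1" by simp
        show "x \<ge> 1" by (rule x1)
        show "x < B"
        proof (rule ccontr)
          assume "\<not> x < B"
          then have "B \<le> x" by simp
          have Bp: "B > 0" unfolding B_def using nt n2 t by simp
          have "x powr - \<alpha> \<le> B powr - \<alpha>" using \<open>B \<le> x\<close> Bp a by (intro powr_mono2') auto
          also have "B powr - \<alpha> = (n2 * t) powr (- \<alpha> / n2)"
            unfolding B_def by (simp add: powr_powr)
          finally have "L * x powr - \<alpha> \<le> L * (n2 * t) powr (- \<alpha> / n2)"
            using L by (intro mult_left_mono) auto
          then have "\<bar>h x\<bar> \<le> s" using hL[OF x1] False unfolding s_def by simp
          then show False using x(2) by simp
        qed
      qed
      have "distrib_fun ?M h s \<le> emeasure ?M ({..<B} \<inter> {1..})"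
        unfolding distrib_fun_def by (rule emeasure_mono[OF sub borel_rm_set]) simp
      also have "\<dots> = (\<integral>\<^sup>+ y. indicator ({..<B} \<inter> {1..}) y \<partial>?M)"
        using borel_rm_set[of "{..<B}" n2] by simp
      also have "\<dots> = (\<integral>\<^sup>+ y. indicator {..<B} y * ennreal (y powr 0) \<partial>?M)"
        by (rule nn_integral_cong) (auto simp: indicator_def)
      also have "\<dots> \<le> ennreal (B powr (0 + n2) / (0 + n2))"
        by (rule rm_powr_bound) (use n2 B0 in auto)
      also have "B powr (0 + n2) / (0 + n2) = t"
        unfolding B_def using n2 nt by (simp add: powr_powr)
      finally show ?thesis .
    qed
    have "rearrangement ?M h t \<le> ennreal s"
      unfolding rearrangement_def by (rule Inf_lower) (use s0 Ds in auto)
    then have "ennreal (t powr (1 / q)) * rearrangement ?M h t \<le> ennreal (t powr (1 / q)) * ennreal s"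
      by (rule mult_left_mono) simp
    also have "\<dots> = ennreal (t powr (1 / q) * s)" using s0 by (simp add: ennreal_mult)
    also have "t powr (1 / q) * s \<le> L"
    proof (cases "t \<le> 1")
      case True
      have "t powr (1/q) \<le> 1 powr (1/q)" using t True q0 by (intro powr_mono2) auto
      then have "t powr (1/q) * L \<le> 1 * L" using L by (intro mult_right_mono) auto
      then show ?thesis using True unfolding s_def by simp
    next
      case False
      have e1: "(n2 * t) powr (- \<alpha> / n2) = n2 powr (- \<alpha> / n2) * t powr (- \<alpha> / n2)"
        by (rule powr_mult)
      have e2: "t powr (1/q) * t powr (- \<alpha> / n2) = t powr (1/q + - \<alpha> / n2)"
        by (rule powr_add[symmetric])
      have le1: "t powr (1/q + - \<alpha> / n2) \<le> t powr 0"
        using False qa by (intro powr_mono) auto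
      have le1': "t powr (1/q + - \<alpha> / n2) \<le> 1" using le1 t by simp
      have le2: "n2 powr (- \<alpha> / n2) \<le> 1 powr (- \<alpha> / n2)"
        using n2 a by (intro powr_mono2') auto
      have le2': "n2 powr (- \<alpha> / n2) \<le> 1" using le2 by simp
      have "t powr (1 / q) * (n2 * t) powr (- \<alpha> / n2)
          = n2 powr (- \<alpha> / n2) * (t powr (1/q) * t powr (- \<alpha> / n2))"
        unfolding e1 by (simp only: mult.left_commute)
      also have "\<dots> = n2 powr (- \<alpha> / n2) * t powr (1/q + - \<alpha> / n2)" unfolding e2 ..
      also have "\<dots> \<le> 1 * 1" by (rule mult_mono[OF le2' le1']) auto
      finally have "t powr (1 / q) * (n2 * t) powr (- \<alpha> / n2) \<le> 1" by simp
      then have "t powr (1 / q) * (n2 * t) powr (- \<alpha> / n2) * L \<le> 1 * L"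
        using L by (intro mult_right_mono) auto
      then show ?thesis using False unfolding s_def by (simp add: mult.commute mult.left_commute)
    qed
    then have "ennreal (t powr (1 / q) * s) \<le> ennreal L" by (rule ennreal_leI)
    also have "ennreal L = ennreal K + ennreal \<epsilon>" unfolding L_def using K \<epsilon> by (simp add: ennreal_plus)
    finally show "ennreal (t powr (1 / q)) * rearrangement ?M h t \<le> ennreal K + ennreal \<epsilon>" .
  qed
qed

theorem lemma2p3:
  fixes n1 n2 \<alpha> \<beta> p q :: real
  assumes "n1 > 1" and "n2 > 1"
    and "0 < \<beta>" and "\<beta> < n1" and "\<alpha> > 0"
    and "1 < p" and "p \<le> n1 / (n1 - \<beta>)"
    and "q \<ge> n2 / \<alpha>"
  shows "\<exists>C::real. C \<ge> 0 \<and>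
    (\<forall>f. f \<in> borel_measurable (radial_measure n1) \<longrightarrow>
         lorentz_p1 (radial_measure n1) p f < \<infinity> \<longrightarrow>
           (\<forall>x\<ge>1. set_integrable (radial_measure n1) {x..} (\<lambda>y. y powr (-\<beta>) * f y))
         \<and> R1 n1 \<alpha> \<beta> f \<in> borel_measurable (radial_measure n2)
         \<and> lorentz_qinf (radial_measure n2) q (R1 n1 \<alpha> \<beta> f)
             \<le> ennreal C * lorentz_p1 (radial_measure n1) p f)"
proof -
  define C where "C = 1 + 1 / (n1 - \<beta>)"
  have C0: "C \<ge> 0" unfolding C_def using assms by simp
  show ?thesis
  proof (rule exI[of _ C], rule conjI)
    show "C \<ge> 0" by (rule C0)
    show "\<forall>f. f \<in> borel_measurable (radial_measure n1) \<longrightarrow>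
         lorentz_p1 (radial_measure n1) p f < \<infinity> \<longrightarrow>
           (\<forall>x\<ge>1. set_integrable (radial_measure n1) {x..} (\<lambda>y. y powr (-\<beta>) * f y))
         \<and> R1 n1 \<alpha> \<beta> f \<in> borel_measurable (radial_measure n2)
         \<and> lorentz_qinf (radial_measure n2) q (R1 n1 \<alpha> \<beta> f)
             \<le> ennreal C * lorentz_p1 (radial_measure n1) p f"
    proof (intro allI impI)
      fix f :: "real \<Rightarrow> real"
      assume f[measurable]: "f \<in> borel_measurable (radial_measure n1)"
        and fin: "lorentz_p1 (radial_measure n1) p f < \<infinity>"
      let ?M = "radial_measure n1"
      let ?g = "\<lambda>y. y powr (-\<beta>) * f y"
      define Kn where "Kn = (\<integral>\<^sup>+ y. ennreal \<bar>f y\<bar> * ennreal (y powr - \<beta>) \<partial>?M)"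
      have Kle: "Kn \<le> ennreal C * lorentz_p1 ?M p f"
        unfolding Kn_def C_def by (rule weighted_bound) (use assms f in auto)
      have Kfin: "Kn < \<infinity>"
      proof -
        have "ennreal C * lorentz_p1 ?M p f < \<infinity>"
          using fin by (simp add: ennreal_mult_less_top)
        then show ?thesis using Kle by (rule le_less_trans[rotated])
      qed
      have w[measurable]: "(\<lambda>y::real. y powr - \<beta>) \<in> borel_measurable ?M" by (rule borel_rm) simp
      have gm[measurable]: "?g \<in> borel_measurable ?M" by measurable
      have gnorm: "(\<integral>\<^sup>+ y. ennreal (norm (?g y)) \<partial>?M) = Kn"
        unfolding Kn_def
      proof (rule nn_integral_cong)
        fix y :: real
        have "norm (?g y) = \<bar>f y\<bar> * y powr - \<beta>" by (simp add: abs_mult)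
        then show "ennreal (norm (?g y)) = ennreal \<bar>f y\<bar> * ennreal (y powr - \<beta>)"
          by (simp add: ennreal_mult)
      qed
      have gint: "integrable ?M ?g"
        by (rule integrableI_bounded[OF gm]) (use gnorm Kfin in simp)
      have setint: "\<forall>x\<ge>1. set_integrable ?M {x..} ?g"
      proof (intro allI impI)
        fix x :: real assume x: "x \<ge> 1"
        have "{x..} \<inter> {1..} = {x..}" using x by auto
        then have "{x..} \<in> sets ?M" using borel_rm_set[of "{x..}" n1] by simp
        then show "set_integrable ?M {x..} ?g"
          unfolding set_integrable_def by (rule integrable_mult_indicator[OF _ gint])
      qed
      define K where "K = enn2real Kn"
      have KK: "Kn = ennreal K" "K \<ge> 0" using Kfin unfolding K_def by (auto simp: less_top)
      have bound: "\<bar>R1 n1 \<alpha> \<beta> f x\<bar> \<le> x powr - \<alpha> * K" if x: "x \<ge> 1" for x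
      proof -
        have si: "integrable ?M (\<lambda>y. indicator {x..} y *\<^sub>R ?g y)"
          using setint x unfolding set_integrable_def by auto
        have "ennreal (norm (LINT y:{x..}|?M. ?g y)) \<le> (\<integral>\<^sup>+ y. ennreal (norm (indicator {x..} y *\<^sub>R ?g y)) \<partial>?M)"
          unfolding set_lebesgue_integral_def by (rule integral_norm_bound_ennreal[OF si])
        also have "\<dots> \<le> (\<integral>\<^sup>+ y. ennreal (norm (?g y)) \<partial>?M)"
          by (intro nn_integral_mono) (auto simp: indicator_def)
        also have "\<dots> = ennreal K" using gnorm KK by simp
        finally have I: "\<bar>LINT y:{x..}|?M. ?g y\<bar> \<le> K" using KK by (simp add: ennreal_le_iff)
        have "\<bar>R1 n1 \<alpha> \<beta> f x\<bar> = x powr - \<alpha> * \<bar>LINT y:{x..}|?M. ?g y\<bar>"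
          unfolding R1_def by (simp add: abs_mult)
        also have "\<dots> \<le> x powr - \<alpha> * K" using I by (intro mult_left_mono) auto
        finally show ?thesis .
      qed
      have R1m: "R1 n1 \<alpha> \<beta> f \<in> borel_measurable (radial_measure n2)"
      proof -
        have eq: "R1 n1 \<alpha> \<beta> f = (\<lambda>x. x powr - \<alpha> * (\<integral>y. (if x \<le> y then y powr - \<beta> * f y else 0) \<partial>?M))"
          unfolding R1_def set_lebesgue_integral_def
          by (auto intro!: ext Bochner_Integration.integral_cong simp: indicator_def)
        have sf: "sigma_finite_measure ?M" by (rule sf_rm) (use assms in simp)
        have id2[measurable]: "(\<lambda>x::real. x) \<in> borel_measurable (radial_measure n2)" by (rule borel_rm) simp
        have pw2[measurable]: "(\<lambda>x::real. x powr - \<alpha>) \<in> borel_measurable (radial_measure n2)" by (rule borel_rm) simp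
        have "(\<lambda>x. \<integral>y. (if x \<le> y then y powr - \<beta> * f y else 0) \<partial>?M) \<in> borel_measurable (radial_measure n2)"
          by (rule sigma_finite_measure.borel_measurable_lebesgue_integral[OF sf]) measurable
        then show ?thesis unfolding eq by measurable
      qed
      have "lorentz_qinf (radial_measure n2) q (R1 n1 \<alpha> \<beta> f) \<le> ennreal K"
        by (rule weak_bound) (use assms KK bound in auto)
      also have "\<dots> \<le> ennreal C * lorentz_p1 ?M p f" using Kle KK by simp
      finally show "(\<forall>x\<ge>1. set_integrable (radial_measure n1) {x..} (\<lambda>y. y powr (-\<beta>) * f y))
         \<and> R1 n1 \<alpha> \<beta> f \<in> borel_measurable (radial_measure n2)
         \<and> lorentz_qinf (radial_measure n2) q (R1 n1 \<alpha> \<beta> f)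
             \<le> ennreal C * lorentz_p1 (radial_measure n1) p f"
        using setint R1m by blast
    qed
  qed
qed

end
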